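(* Let $n\in\mathbb{N}$ be even and let $\mathbf{s}=(s_0,\ldots,s_n)\subset[0,\infty)$ be strictly positive on $(0,\infty)$. Let $K=\left\lceil\frac{n+1}{2}\right\rceil$ and let $\mathcal{M}^{\min}_\infty(\mathbf{s})$ be the set of $\mu\in\mathcal{M}_\infty(\mathbf{s})$ with $\#\mathrm{supp}\,\mu=K$. Then the map $\Phi:\mathcal{M}^{\min}_\infty(\mathbf{s})\to(t_\infty(\mathbf{s}),\infty)$, $\Phi(\mu)=\int_{(0,\infty)}\frac1t\,d\mu(t)$, is a well-defined bijection. Moreover, for $s_{-1}\in(t_\infty(\mathbf{s}),\infty)$ the atoms of $\Phi^{-1}(s_{-1})$ are the roots of $Q(t)=\det\begin{bmatrix}s_{-1}&s_0&\cdots&s_{K-2}&1\\ s_0&s_1&\cdots&s_{K-1}&t\\ \vdots&&&&\vdots\\ s_{K-1}&s_K&\cdots&s_{2K-2}&t^K\end{bmatrix}$.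
   Context: For $a<b$, $\mathbf{s}$ is strictly positive on $[a,b]$ if the functional $\sigma(x^k)=s_k$ is $\ge0$ on real polynomials of degree $\le n$ nonnegative on $[a,b]$ and $>0$ on such polynomials not identically zero; strictly positive on $(0,\infty)$ means on some $[a,b]\subset(0,\infty)$. $\mathcal{M}_{a,b}(\mathbf{s})$: positive Borel measures on $[a,b]$ with $k$-th moments $s_k$; $\mathcal{M}_\infty(\mathbf{s})$: positive Borel measures on $(0,\infty)$ supported in a compact subinterval of $(0,\infty)$ with $k$-th moments $s_k$, $k\le n$. $t_{a,b}(\mathbf{s})=\inf\{\int\frac1t\,d\mu:\mu\in\mathcal{M}_{a,b}(\mathbf{s})\}$ ($\inf\varnothing=\infty$), $t_\infty(\mathbf{s})=\inf_{0<a<b}t_{a,b}(\mathbf{s})$. *)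

theory Defs
  imports "HOL-Analysis.Analysis" "HOL-Computational_Algebra.Polynomial"
    "Jordan_Normal_Form.Determinant"
begin

definition mom_functional :: "nat \<Rightarrow> (nat \<Rightarrow> real) \<Rightarrow> real poly \<Rightarrow> real" where
  "mom_functional n s p = (\<Sum>k\<le>n. coeff p k * s k)"

definition strictly_pos_on :: "nat \<Rightarrow> (nat \<Rightarrow> real) \<Rightarrow> real \<Rightarrow> real \<Rightarrow> bool" where
  "strictly_pos_on n s a b \<longleftrightarrow> a < b \<and>
     (\<forall>p::real poly. degree p \<le> n \<and> (\<forall>x\<in>{a..b}. poly p x \<ge> 0) \<longrightarrow>
        mom_functional n s p \<ge> 0 \<and> (p \<noteq> 0 \<longrightarrow> mom_functional n s p > 0))"

definition strictly_pos_infty :: "nat \<Rightarrow> (nat \<Rightarrow> real) \<Rightarrow> bool" where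
  "strictly_pos_infty n s \<longleftrightarrow> (\<exists>a b. 0 < a \<and> strictly_pos_on n s a b)"

text \<open>M_{a,b}(s): positive Borel measures on [a,b] (represented as Borel measures on the
  real line vanishing outside [a,b]) with k-th moments s_k, k \<le> n.\<close>
definition M_ab :: "nat \<Rightarrow> (nat \<Rightarrow> real) \<Rightarrow> real \<Rightarrow> real \<Rightarrow> real measure set" where
  "M_ab n s a b = {\<mu>. sets \<mu> = sets borel \<and> emeasure \<mu> (- {a..b}) = 0 \<and>
      (\<forall>k\<le>n. integrable \<mu> (\<lambda>t. t ^ k) \<and> (\<integral>t. t ^ k \<partial>\<mu>) = s k)}"

definition M_infty :: "nat \<Rightarrow> (nat \<Rightarrow> real) \<Rightarrow> real measure set" where
  "M_infty n s = (\<Union>a\<in>{0<..}. \<Union>b\<in>{a<..}. M_ab n s a b)"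

definition t_ab :: "nat \<Rightarrow> (nat \<Rightarrow> real) \<Rightarrow> real \<Rightarrow> real \<Rightarrow> ereal" where
  "t_ab n s a b = (INF \<mu>\<in>M_ab n s a b. ereal (\<integral>t. 1 / t \<partial>\<mu>))"

definition t_infty :: "nat \<Rightarrow> (nat \<Rightarrow> real) \<Rightarrow> ereal" where
  "t_infty n s = (INF a\<in>{0<..}. INF b\<in>{a<..}. t_ab n s a b)"

definition msupp :: "real measure \<Rightarrow> real set" where
  "msupp \<mu> = {x. \<forall>e>0. emeasure \<mu> (ball x e) > 0}"

definition Q_det :: "nat \<Rightarrow> (nat \<Rightarrow> real) \<Rightarrow> real \<Rightarrow> real \<Rightarrow> real" where
  "Q_det K s sm1 t = Determinant.det (Matrix.mat (K + 1) (K + 1)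
     (\<lambda>(i, j). if j = K then t ^ i
               else if i + j = 0 then sm1 else s (i + j - 1)))"

end

theory Submission
  imports Defs "HOL-Computational_Algebra.Fundamental_Theorem_Algebra"
begin

lemma cpoly_add: "poly (map_poly complex_of_real (p + q)) z = poly (map_poly complex_of_real p) z + poly (map_poly complex_of_real q) z"
  by (induction p q rule: poly_induct2) (auto simp: map_poly_pCons algebra_simps)

lemma cpoly_smult: "poly (map_poly complex_of_real (Polynomial.smult a p)) z = of_real a * poly (map_poly complex_of_real p) z"
  by (induction p) (auto simp: map_poly_pCons algebra_simps)

lemma cpoly_mult: "poly (map_poly complex_of_real (p * q)) z = poly (map_poly complex_of_real p) z * poly (map_poly complex_of_real q) z"
proof (induction p)
  case 0 then show ?case by simp
next
  case (pCons a p)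
  have "pCons a p * q = Polynomial.smult a q + pCons 0 (p * q)" by simp
  then show ?case using pCons
    by (simp add: cpoly_add cpoly_smult map_poly_pCons algebra_simps)
qed

lemma cpoly_real: "poly (map_poly complex_of_real p) (of_real x) = of_real (poly p x)"
  by (induction p) (auto simp: map_poly_pCons)

lemma cpoly_deg: "degree (map_poly complex_of_real p) = degree p"
  by (simp add: degree_map_poly)


lemma sq_id1: fixes A g h :: "'a::comm_ring_1" shows "A^2 * (g^2+h^2) = (A*g)^2 + (A*h)^2"
  by (simp add: power_mult_distrib distrib_left)

lemma sq_id2: fixes A B g h :: "'a::comm_ring_1"
  shows "(A^2 + B^2) * (g^2+h^2) = (A*g - B*h)^2 + (A*h + B*g)^2"
  by (simp add: power2_eq_square algebra_simps)

lemma lin_factor_nz: "[:-x,1:] \<noteq> (0::real poly)" by simp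

lemma sos_roots:
  fixes f :: "real poly"
  assumes "f \<noteq> 0"
  shows "\<exists>Z g h c. finite Z \<and> (\<forall>z\<in>Z. poly f z = 0) \<and> c \<noteq> 0 \<and>
     f * (\<Prod>z\<in>Z. [:-z,1:]) = Polynomial.smult c (g^2 + h^2) \<and>
     2 * degree g \<le> degree f + card Z \<and> 2 * degree h \<le> degree f + card Z"
  using assms
proof (induction "degree f" arbitrary: f rule: less_induct)
  case less
  show ?case
  proof (cases "degree f = 0")
    case True
    then obtain c where f: "f = [:c:]" using degree_eq_zeroE by blast
    with less.prems have "c \<noteq> 0" by auto
    show ?thesis
      by (rule exI[of _ "{}"], rule exI[of _ 1], rule exI[of _ 0], rule exI[of _ c])
        (use f \<open>c\<noteq>0\<close> in simp)
  next
    case deg: False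
    show ?thesis
    proof (cases "\<exists>x. poly f x = 0")
      case True
      then obtain x where x: "poly f x = 0" by blast
      then have "[:-x,1:] dvd f" using poly_eq_0_iff_dvd by blast
      then obtain f1 where f1: "f = [:-x,1:] * f1" by (elim dvdE)
      have f1nz: "f1 \<noteq> 0" using less.prems f1 by auto
      have degf: "degree f = degree f1 + 1"
      proof -
        have "degree ([:-x,1:] * f1) = degree [:-x,1:] + degree f1"
          by (rule degree_mult_eq) (use f1nz in auto)
        then show ?thesis using f1 by simp
      qed
      from less.hyps[of f1] degf f1nz obtain Z g h c where IH: "finite Z" "\<forall>z\<in>Z. poly f1 z = 0" "c \<noteq> 0"
        "f1 * (\<Prod>z\<in>Z. [:-z,1:]) = Polynomial.smult c (g^2+h^2)"
        "2*degree g \<le> degree f1 + card Z" "2 * degree h \<le> degree f1 + card Z" by force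
      show ?thesis
      proof (cases "x \<in> Z")
        case True
        have pr: "(\<Prod>z\<in>Z. [:-z,1:]) = [:-x,1:] * (\<Prod>z\<in>Z-{x}. [:-z,1:])"
          by (rule prod.remove[OF IH(1) True])
        have card: "card Z = card (Z - {x}) + 1" using IH(1) True
          by (metis One_nat_def Suc_eq_plus1 card_Suc_Diff1)
        have e: "f * (\<Prod>z\<in>Z-{x}. [:-z,1:]) = f1 * (\<Prod>z\<in>Z. [:-z,1:])"
          unfolding pr f1 by (simp only: mult_ac)
        show ?thesis
          apply (rule exI[of _ "Z-{x}"], rule exI[of _ g], rule exI[of _ h], rule exI[of _ c])
          using IH card e degf f1 by auto
      next
        case False
        have pr: "(\<Prod>z\<in>insert x Z. [:-z,1:]) = [:-x,1:] * (\<Prod>z\<in>Z. [:-z,1:])"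
          by (rule prod.insert[OF IH(1) False])
        have card: "card (insert x Z) = card Z + 1" using IH(1) False by simp
        have e: "f * (\<Prod>z\<in>insert x Z. [:-z,1:]) = Polynomial.smult c (([:-x,1:]*g)^2 + ([:-x,1:]*h)^2)"
        proof -
          have "f * (\<Prod>z\<in>insert x Z. [:-z,1:]) = [:-x,1:]^2 * (f1 * (\<Prod>z\<in>Z. [:-z,1:]))"
            unfolding pr f1 power2_eq_square by (simp only: mult_ac)
          also have "\<dots> = [:-x,1:]^2 * Polynomial.smult c (g^2+h^2)" using IH(4) by simp
          also have "\<dots> = Polynomial.smult c (([:-x,1:]*g)^2 + ([:-x,1:]*h)^2)"
            by (simp only: mult_smult_right sq_id1)
          finally show ?thesis .
        qed
        have dg: "degree ([:-x,1:]*g) \<le> degree g + 1"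
          using degree_mult_le[of "[:-x,1:]" g] by simp
        have dh: "degree ([:-x,1:]*h) \<le> degree h + 1"
          using degree_mult_le[of "[:-x,1:]" h] by simp
        show ?thesis
          apply (rule exI[of _ "insert x Z"], rule exI[of _ "[:-x,1:]*g"], rule exI[of _ "[:-x,1:]*h"], rule exI[of _ c])
          using IH card e degf f1 x dg dh by auto
      qed
    next
      case False
      let ?F = "map_poly complex_of_real f"
      have "\<not> constant (poly ?F)" using deg by (simp add: constant_degree cpoly_deg)
      then obtain z where z: "poly ?F z = 0" using fundamental_theorem_of_algebra by blast
      define \<alpha> where "\<alpha> = Re z"
      define \<beta> where "\<beta> = Im z"
      have zab: "z = Complex \<alpha> \<beta>" unfolding \<alpha>_def \<beta>_def by simp
      have bnz: "\<beta> \<noteq> 0"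
      proof
        assume "\<beta> = 0"
        then have "z = of_real \<alpha>" using zab by (simp add: complex_eq_iff)
        then have "poly f \<alpha> = 0" using z cpoly_real[of f \<alpha>] by simp
        then show False using False by blast
      qed
      define D where "D = [:\<alpha>^2+\<beta>^2, -2*\<alpha>, 1:]"
      have Dz: "poly (map_poly complex_of_real D) z = 0"
        unfolding D_def zab by (simp add: map_poly_pCons complex_eq_iff power2_eq_square algebra_simps)
      have degD: "degree D = 2" unfolding D_def by simp
      have Dnz: "D \<noteq> 0" using degD by auto
      define q where "q = f div D"
      define r where "r = f mod D"
      have fqr: "f = D * q + r" unfolding q_def r_def by simp
      have r0: "r = 0"
      proof (rule ccontr)
        assume rnz: "r \<noteq> 0"
        then have "degree r < 2" using degree_mod_less'[OF Dnz] degD unfolding r_def by auto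
        then have req: "r = [:coeff r 0, coeff r 1:]"
          by (intro poly_eqI) (auto simp: coeff_pCons split: nat.split intro!: coeff_eq_0)
        have "poly (map_poly complex_of_real r) z = 0"
          using z Dz fqr cpoly_add[of "D*q" r z] cpoly_mult[of D q z] by simp
        then have "of_real (coeff r 0) + of_real (coeff r 1) * z = 0"
          by (subst (asm) req) (simp add: map_poly_pCons mult.commute)
        then have "coeff r 1 * \<beta> = 0" "coeff r 0 + coeff r 1 * \<alpha> = 0"
          unfolding zab by (simp_all add: complex_eq_iff)
        then have "coeff r 1 = 0" "coeff r 0 = 0" using bnz by auto
        then have "r = 0" using req by simp
        then show False using rnz by simp
      qed
      have fq: "f = D * q" using fqr r0 by simp
      have qnz: "q \<noteq> 0" using fq less.prems by auto
      have degf: "degree f = degree q + 2" using fq qnz Dnz degD by (simp add: degree_mult_eq)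
      from less.hyps[of q] degf qnz obtain Z g h c where IH: "finite Z" "\<forall>z\<in>Z. poly q z = 0" "c \<noteq> 0"
        "q * (\<Prod>z\<in>Z. [:-z,1:]) = Polynomial.smult c (g^2+h^2)"
        "2*degree g \<le> degree q + card Z" "2 * degree h \<le> degree q + card Z" by force
      define g' where "g' = [:-\<alpha>,1:]*g - [:\<beta>:]*h"
      define h' where "h' = [:-\<alpha>,1:]*h + [:\<beta>:]*g"
      have Deq: "D = [:-\<alpha>,1:]^2 + [:\<beta>:]^2"
        unfolding D_def by (simp add: power2_eq_square algebra_simps)
      have e: "f * (\<Prod>z\<in>Z. [:-z,1:]) = Polynomial.smult c (g'^2 + h'^2)"
      proof -
        have "f * (\<Prod>z\<in>Z. [:-z,1:]) = D * (q * (\<Prod>z\<in>Z. [:-z,1:]))" using fq by (simp add: mult_ac)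
        also have "\<dots> = D * Polynomial.smult c (g^2+h^2)" using IH(4) by simp
        also have "\<dots> = Polynomial.smult c (g'^2 + h'^2)"
          unfolding Deq g'_def h'_def by (simp only: mult_smult_right sq_id2)
        finally show ?thesis .
      qed
      have d1: "degree ([:-\<alpha>,1:]*g) \<le> degree g + 1" using degree_mult_le[of "[:-\<alpha>,1:]" g] by simp
      have d2: "degree ([:-\<alpha>,1:]*h) \<le> degree h + 1" using degree_mult_le[of "[:-\<alpha>,1:]" h] by simp
      have d3: "degree ([:\<beta>:]*h) \<le> degree h" using degree_mult_le[of "[:\<beta>:]" h] by simp
      have d4: "degree ([:\<beta>:]*g) \<le> degree g" using degree_mult_le[of "[:\<beta>:]" g] by simp
      have dg': "degree g' \<le> max (degree g + 1) (degree h)"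
        unfolding g'_def using degree_diff_le_max[of "[:-\<alpha>,1:]*g" "[:\<beta>:]*h"] d1 d3 by linarith
      have dh': "degree h' \<le> max (degree h + 1) (degree g)"
        unfolding h'_def using degree_add_le_max[of "[:-\<alpha>,1:]*h" "[:\<beta>:]*g"] d2 d4 by linarith
      have roots: "\<forall>x\<in>Z. poly f x = 0" using IH(2) fq by simp
      show ?thesis
        apply (rule exI[of _ Z], rule exI[of _ g'], rule exI[of _ h'], rule exI[of _ c])
        using IH e roots degf dg' dh' by auto
    qed
  qed
qed

definition cc :: "(nat \<Rightarrow> real) \<Rightarrow> real \<Rightarrow> nat \<Rightarrow> real" where
  "cc s x k = (if k = 0 then x else s (k - 1))"

definition LL :: "nat \<Rightarrow> (nat \<Rightarrow> real) \<Rightarrow> real \<Rightarrow> real poly \<Rightarrow> real" where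
  "LL m s x p = (\<Sum>k\<le>2*m+1. coeff p k * cc s x k)"

definition pdC :: "nat \<Rightarrow> (nat \<Rightarrow> real) \<Rightarrow> real \<Rightarrow> bool" where
  "pdC m s x \<longleftrightarrow> (\<forall>q. q \<noteq> 0 \<and> degree q \<le> m \<longrightarrow> LL m s x (q^2) > 0)"

lemma LL_add: "LL m s x (p + q) = LL m s x p + LL m s x q"
  by (simp add: LL_def algebra_simps sum.distrib)

lemma LL_diff: "LL m s x (p - q) = LL m s x p - LL m s x q"
  by (simp add: LL_def algebra_simps sum_subtractf)

lemma LL_smult: "LL m s x (Polynomial.smult a p) = a * LL m s x p"
  by (simp add: LL_def sum_distrib_left algebra_simps)

lemma LL_zero[simp]: "LL m s x 0 = 0" by (simp add: LL_def)

lemma LL_sum: "LL m s x (\<Sum>i\<in>A. f i) = (\<Sum>i\<in>A. LL m s x (f i))"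
  by (induction A rule: infinite_finite_induct) (auto simp: LL_add)

lemma LL_monom: "LL m s x (monom a k) = (if k \<le> 2*m+1 then a * cc s x k else 0)"
proof -
  have "LL m s x (monom a k) = (\<Sum>j\<le>2*m+1. if j = k then a * cc s x j else 0)"
    unfolding LL_def by (intro sum.cong) (auto simp: coeff_monom)
  then show ?thesis by simp
qed

lemma LL_shift: "LL m s y p = LL m s x p + (y - x) * coeff p 0"
proof -
  have "LL m s y p = coeff p 0 * y + (\<Sum>k\<in>{1..2*m+1}. coeff p k * cc s y k)"
    unfolding LL_def by (simp add: sum.atMost_shift cc_def atMost_atLeast0 sum.atLeast_Suc_atMost)
  moreover have "LL m s x p = coeff p 0 * x + (\<Sum>k\<in>{1..2*m+1}. coeff p k * cc s x k)"
    unfolding LL_def by (simp add: sum.atMost_shift cc_def atMost_atLeast0 sum.atLeast_Suc_atMost)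
  moreover have "(\<Sum>k\<in>{1..2*m+1}. coeff p k * cc s y k) = (\<Sum>k\<in>{1..2*m+1}. coeff p k * cc s x k)"
    by (intro sum.cong) (auto simp: cc_def)
  ultimately show ?thesis by (simp add: algebra_simps)
qed

lemma LL_pCons0:
  "LL m s x (pCons 0 q) = mom_functional (2*m) s q"
  unfolding LL_def mom_functional_def
  by (simp add: sum.atMost_Suc_shift cc_def del: sum.atMost_Suc)


definition QM :: "nat \<Rightarrow> (nat \<Rightarrow> real) \<Rightarrow> real \<Rightarrow> real \<Rightarrow> real mat" where
  "QM m s x t = Matrix.mat (Suc m + 1) (Suc m + 1)
     (\<lambda>(i, j). if j = Suc m then t ^ i else if i + j = 0 then x else s (i + j - 1))"

lemma Q_det_QM: "Q_det (Suc m) s x t = Determinant.det (QM m s x t)"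
  unfolding Q_det_def QM_def by simp

definition cof :: "nat \<Rightarrow> (nat \<Rightarrow> real) \<Rightarrow> real \<Rightarrow> nat \<Rightarrow> real" where
  "cof m s x i = cofactor (QM m s x 0) i (Suc m)"

lemma mat_delete_lastcol:
  assumes "dim_row A = Suc m + 1" "dim_col A = Suc m + 1" "dim_row B = Suc m + 1" "dim_col B = Suc m + 1"
    and "\<And>i j. i < Suc m + 1 \<Longrightarrow> j < Suc m \<Longrightarrow> A $$ (i,j) = B $$ (i,j)"
  shows "mat_delete A i (Suc m) = mat_delete B i (Suc m)"
  unfolding mat_delete_def using assms by (intro cong_mat) auto

lemma cofactor_QM: "cofactor (QM m s x t) i (Suc m) = cof m s x i"
  unfolding cof_def cofactor_def
  by (subst mat_delete_lastcol[of _ m "QM m s x 0"]) (auto simp: QM_def)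

lemma Q_det_expand: "Q_det (Suc m) s x t = (\<Sum>i<Suc m + 1. t ^ i * cof m s x i)"
proof -
  have "Determinant.det (QM m s x t) = (\<Sum>i<Suc m + 1. QM m s x t $$ (i, Suc m) * cofactor (QM m s x t) i (Suc m))"
    by (rule laplace_expansion_column) (auto simp: QM_def)
  also have "\<dots> = (\<Sum>i<Suc m + 1. t ^ i * cof m s x i)"
  proof (intro sum.cong refl)
    fix i assume "i \<in> {..<Suc m + 1}"
    then show "QM m s x t $$ (i, Suc m) * cofactor (QM m s x t) i (Suc m) = t ^ i * cof m s x i"
      unfolding cofactor_QM by (simp add: QM_def)
  qed
  finally show ?thesis by (simp add: Q_det_QM)
qed

lemma cof_orth:
  assumes "j \<le> m"
  shows "(\<Sum>i<Suc m + 1. cc s x (i + j) * cof m s x i) = 0"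
proof -
  define N where "N = Matrix.mat (Suc m + 1) (Suc m + 1) (\<lambda>(i, j'). if j' = Suc m then cc s x (i + j) else cc s x (i + j'))"
  have NC: "N \<in> carrier_mat (Suc m + 1) (Suc m + 1)" unfolding N_def by simp
  have "Determinant.det N = (\<Sum>i<Suc m + 1. N $$ (i, Suc m) * cofactor N i (Suc m))"
    by (rule laplace_expansion_column[OF NC]) auto
  also have "\<dots> = (\<Sum>i<Suc m + 1. cc s x (i + j) * cof m s x i)"
  proof (intro sum.cong refl)
    fix i assume i: "i \<in> {..<Suc m + 1}"
    have "cofactor N i (Suc m) = cof m s x i"
      unfolding cof_def cofactor_def
      by (subst mat_delete_lastcol[of _ m "QM m s x 0"]) (auto simp: QM_def N_def cc_def)
    then show "N $$ (i, Suc m) * cofactor N i (Suc m) = cc s x (i + j) * cof m s x i"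
      using i by (simp add: N_def)
  qed
  finally have 1: "Determinant.det N = (\<Sum>i<Suc m + 1. cc s x (i + j) * cof m s x i)" .
  have "Determinant.det N = 0"
    by (rule det_identical_columns[OF NC, of j "Suc m"]) (use assms in \<open>auto simp: N_def\<close>)
  with 1 show ?thesis by simp
qed

definition Cm :: "nat \<Rightarrow> (nat \<Rightarrow> real) \<Rightarrow> real \<Rightarrow> real mat" where
  "Cm m s x = Matrix.mat (Suc m) (Suc m) (\<lambda>(i, j). cc s x (i + j))"

lemma cof_lead: "cof m s x (Suc m) = Determinant.det (Cm m s x)"
proof -
  have "mat_delete (QM m s x 0) (Suc m) (Suc m) = Cm m s x"
    unfolding mat_delete_def QM_def Cm_def by (intro cong_mat) (auto simp: cc_def)
  then show ?thesis unfolding cof_def cofactor_def by simp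
qed


definition Pq :: "nat \<Rightarrow> (nat \<Rightarrow> real) \<Rightarrow> real \<Rightarrow> real poly" where
  "Pq m s x = (\<Sum>i<Suc m + 1. monom (cof m s x i) i)"

lemma poly_Pq: "poly (Pq m s x) t = Q_det (Suc m) s x t"
  unfolding Pq_def Q_det_expand by (simp add: poly_sum poly_monom mult.commute)

lemma coeff_Pq: "coeff (Pq m s x) k = (if k < Suc m + 1 then cof m s x k else 0)"
  unfolding Pq_def by (simp add: coeff_sum coeff_monom)

lemma LL_Pq_monom:
  assumes "j \<le> m"
  shows "LL m s x (Pq m s x * monom 1 j) = 0"
proof -
  have "Pq m s x * monom 1 j = (\<Sum>i<Suc m + 1. monom (cof m s x i) (i + j))"
    by (simp only: Pq_def sum_distrib_right mult_monom mult_1_right)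
  then have "LL m s x (Pq m s x * monom 1 j) = (\<Sum>i<Suc m + 1. LL m s x (monom (cof m s x i) (i + j)))"
    by (simp only: LL_sum)
  also have "\<dots> = (\<Sum>i<Suc m + 1. cc s x (i + j) * cof m s x i)"
    by (intro sum.cong refl) (use assms in \<open>auto simp: LL_monom\<close>)
  also have "\<dots> = 0" by (rule cof_orth[OF assms])
  finally show ?thesis .
qed

lemma LL_Pq_orth:
  assumes "degree q \<le> m"
  shows "LL m s x (Pq m s x * q) = 0"
proof -
  have "Pq m s x * q = Pq m s x * (\<Sum>j\<le>degree q. monom (coeff q j) j)"
    by (simp add: poly_as_sum_of_monoms)
  also have "\<dots> = (\<Sum>j\<le>degree q. Polynomial.smult (coeff q j) (Pq m s x * monom 1 j))"
    unfolding sum_distrib_left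
    by (intro sum.cong refl) (metis mult_smult_right smult_monom mult.right_neutral)
  finally have "LL m s x (Pq m s x * q) = (\<Sum>j\<le>degree q. coeff q j * LL m s x (Pq m s x * monom 1 j))"
    by (simp add: LL_sum LL_smult)
  also have "\<dots> = 0" using assms by (intro sum.neutral) (auto simp: LL_Pq_monom)
  finally show ?thesis .
qed

lemma det_Cm_nz:
  assumes "pdC m s x"
  shows "Determinant.det (Cm m s x) \<noteq> 0"
proof
  assume "Determinant.det (Cm m s x) = 0"
  then obtain v where v: "v \<in> carrier_vec (Suc m)" "v \<noteq> 0\<^sub>v (Suc m)" "Cm m s x *\<^sub>v v = 0\<^sub>v (Suc m)"
    using det_0_iff_vec_prod_zero[of "Cm m s x" "Suc m"] by (auto simp: Cm_def)
  define q where "q = (\<Sum>i\<le>m. monom (v $ i) i)"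
  have cq: "coeff q i = (if i \<le> m then v $ i else 0)" for i
    unfolding q_def by (simp add: coeff_sum coeff_monom)
  have "q \<noteq> 0"
  proof
    assume "q = 0"
    then have "v $ i = 0" if "i < Suc m" for i using cq[of i] that by auto
    then have "v = 0\<^sub>v (Suc m)" using v(1) by (intro eq_vecI) auto
    then show False using v(2) by simp
  qed
  moreover have "degree q \<le> m" by (rule degree_le) (auto simp: cq)
  ultimately have pos: "LL m s x (q^2) > 0" using assms unfolding pdC_def by blast
  have "q^2 = (\<Sum>i\<le>m. \<Sum>j\<le>m. monom (v $ i * v $ j) (i + j))"
    unfolding q_def power2_eq_square sum_product by (simp add: mult_monom)
  then have "LL m s x (q^2) = (\<Sum>i\<le>m. \<Sum>j\<le>m. v $ i * v $ j * cc s x (i + j))"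
    by (simp add: LL_sum LL_monom)
  also have "\<dots> = (\<Sum>i\<le>m. v $ i * (Cm m s x *\<^sub>v v) $ i)"
  proof (intro sum.cong refl)
    fix i assume i: "i \<in> {..m}"
    have "(Cm m s x *\<^sub>v v) $ i = (\<Sum>j\<in>{0..<Suc m}. cc s x (i + j) * v $ j)"
      using i v(1) by (simp add: Cm_def scalar_prod_def)
    also have "\<dots> = (\<Sum>j\<le>m. cc s x (i + j) * v $ j)"
      by (rule sum.cong) auto
    finally show "(\<Sum>j\<le>m. v $ i * v $ j * cc s x (i + j)) = v $ i * (Cm m s x *\<^sub>v v) $ i"
      by (simp add: sum_distrib_left mult_ac)
  qed
  also have "\<dots> = 0" using v(3) by simp
  finally show False using pos by simp
qed

lemma degree_Pq:
  assumes "pdC m s x"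
  shows "degree (Pq m s x) = Suc m" and "Pq m s x \<noteq> 0"
proof -
  have lc: "coeff (Pq m s x) (Suc m) \<noteq> 0"
    using det_Cm_nz[OF assms] by (simp add: coeff_Pq cof_lead)
  have "degree (Pq m s x) \<le> Suc m" by (rule degree_le) (auto simp: coeff_Pq)
  moreover have "Suc m \<le> degree (Pq m s x)" using lc by (rule le_degree)
  ultimately show "degree (Pq m s x) = Suc m" by simp
  then show "Pq m s x \<noteq> 0" using lc by auto
qed


lemma deg_linprod: "finite A \<Longrightarrow> degree (\<Prod>z\<in>A. [:-z,1::real:]) = card A"
proof (induction A rule: finite_induct)
  case empty then show ?case by simp
next
  case (insert a A)
  have nz: "(\<Prod>z\<in>A. [:-z,1::real:]) \<noteq> 0" using insert(1) by (simp add: prod_zero_iff)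
  have "degree ([:-a,1:] * (\<Prod>z\<in>A. [:-z,1::real:])) = degree [:-a,1::real:] + degree (\<Prod>z\<in>A. [:-z,1::real:])"
    by (rule degree_mult_eq) (use nz in auto)
  then show ?case using insert by simp
qed

lemma linprod_nz: "finite A \<Longrightarrow> (\<Prod>z\<in>A. [:-z,1::real:]) \<noteq> 0"
  by (simp add: prod_zero_iff)

lemma poly_zero_many_roots:
  fixes p :: "real poly"
  assumes "finite X" "degree p < card X" "\<And>y. y \<in> X \<Longrightarrow> poly p y = 0"
  shows "p = 0"
proof (rule ccontr)
  assume nz: "p \<noteq> 0"
  have "X \<subseteq> {t. poly p t = 0}" using assms(3) by auto
  then have "card X \<le> card {t. poly p t = 0}" using poly_roots_finite[OF nz] by (rule card_mono[rotated])
  also have "\<dots> \<le> degree p" by (rule card_poly_roots_bound[OF nz])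
  finally show False using assms(2) by simp
qed

definition lag :: "real set \<Rightarrow> real \<Rightarrow> real poly" where
  "lag X y = Polynomial.smult (1 / (\<Prod>z\<in>X-{y}. (y - z))) (\<Prod>z\<in>X-{y}. [:-z,1:])"

lemma poly_lag:
  assumes "finite X" "y \<in> X" "w \<in> X"
  shows "poly (lag X y) w = (if w = y then 1 else 0)"
proof (cases "w = y")
  case True
  have "(\<Prod>z\<in>X-{y}. (y - z)) \<noteq> 0" using assms(1) by (simp add: prod_zero_iff)
  then show ?thesis using True by (simp add: lag_def poly_prod)
next
  case False
  then have "(\<Prod>z\<in>X-{y}. (w - z)) = 0" using assms by (simp add: prod_zero_iff)
  then show ?thesis using False by (simp add: lag_def poly_prod)
qed

lemma degree_lag:
  assumes "finite X" "y \<in> X"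
  shows "degree (lag X y) = card X - 1"
proof -
  have "(\<Prod>z\<in>X-{y}. (y - z)) \<noteq> 0" using assms(1) by (simp add: prod_zero_iff)
  then have "degree (lag X y) = card (X - {y})" using assms by (simp add: lag_def deg_linprod)
  then show ?thesis using assms by simp
qed

lemma interp:
  fixes p :: "real poly"
  assumes "finite X" "degree p < card X"
  shows "p = (\<Sum>y\<in>X. Polynomial.smult (poly p y) (lag X y))"
proof -
  define d where "d = p - (\<Sum>y\<in>X. Polynomial.smult (poly p y) (lag X y))"
  have "degree d \<le> card X - 1"
  proof (rule degree_le, intro allI impI)
    fix i assume i: "card X - 1 < i"
    have "coeff p i = 0" using i assms(2) by (intro coeff_eq_0) simp
    moreover have "coeff (lag X y) i = 0" if "y \<in> X" for y
      using i degree_lag[OF assms(1) that] by (intro coeff_eq_0) simp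
    ultimately show "coeff d i = 0" unfolding d_def by (simp add: coeff_sum)
  qed
  then have "degree d < card X" using assms(2) by linarith
  moreover have "poly d y = 0" if "y \<in> X" for y
  proof -
    have "(\<Sum>z\<in>X. poly p z * poly (lag X z) y) = (\<Sum>z\<in>X. if z = y then poly p z else 0)"
      using assms(1) that by (intro sum.cong refl) (auto simp: poly_lag)
    also have "\<dots> = poly p y" using assms(1) that by simp
    finally show ?thesis unfolding d_def by (simp add: poly_sum)
  qed
  ultimately have "d = 0" using poly_zero_many_roots[OF assms(1)] by blast
  then show ?thesis unfolding d_def by simp
qed

lemma Pq_roots:
  assumes pd: "pdC m s x"
  shows "card {t. poly (Pq m s x) t = 0} = Suc m" "finite {t. poly (Pq m s x) t = 0}"
proof -
  let ?P = "Pq m s x"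
  have Pnz: "?P \<noteq> 0" and degP: "degree ?P = Suc m" using degree_Pq[OF pd] by auto
  show fin: "finite {t. poly ?P t = 0}" using poly_roots_finite[OF Pnz] .
  obtain Z g h c where Z: "finite Z" "\<forall>z\<in>Z. poly ?P z = 0" "c \<noteq> 0"
     "?P * (\<Prod>z\<in>Z. [:-z,1:]) = Polynomial.smult c (g^2 + h^2)"
     "2 * degree g \<le> degree ?P + card Z" "2 * degree h \<le> degree ?P + card Z"
    using sos_roots[OF Pnz] by blast
  have "\<not> card Z \<le> m"
  proof
    assume cz: "card Z \<le> m"
    have "LL m s x (?P * (\<Prod>z\<in>Z. [:-z,1:])) = 0"
      by (rule LL_Pq_orth) (use cz deg_linprod[OF Z(1)] in simp)
    then have 0: "c * (LL m s x (g^2) + LL m s x (h^2)) = 0" using Z(4) by (simp add: LL_smult LL_add)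
    have dg: "degree g \<le> m" "degree h \<le> m" using Z(5,6) cz degP by auto
    have "g^2 + h^2 \<noteq> 0" using Z(4) Z(3) Pnz linprod_nz[OF Z(1)] by (metis mult_eq_0_iff smult_eq_0_iff)
    then have "g \<noteq> 0 \<or> h \<noteq> 0" by auto
    moreover have "LL m s x (g^2) \<ge> 0" using pd dg unfolding pdC_def by (cases "g = 0") (auto simp: less_imp_le)
    moreover have "LL m s x (h^2) \<ge> 0" using pd dg unfolding pdC_def by (cases "h = 0") (auto simp: less_imp_le)
    moreover have "g \<noteq> 0 \<Longrightarrow> LL m s x (g^2) > 0" "h \<noteq> 0 \<Longrightarrow> LL m s x (h^2) > 0"
      using pd dg unfolding pdC_def by auto
    ultimately have "LL m s x (g^2) + LL m s x (h^2) > 0" by force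
    then show False using 0 Z(3) by simp
  qed
  then have "Suc m \<le> card Z" by simp
  also have "card Z \<le> card {t. poly ?P t = 0}" using Z(2) fin by (intro card_mono) auto
  finally show "card {t. poly ?P t = 0} = Suc m"
    using card_poly_roots_bound[OF Pnz] degP by simp
qed

definition RX :: "nat \<Rightarrow> (nat \<Rightarrow> real) \<Rightarrow> real \<Rightarrow> real set" where
  "RX m s x = {t. poly (Pq m s x) t = 0}"

definition lam :: "nat \<Rightarrow> (nat \<Rightarrow> real) \<Rightarrow> real \<Rightarrow> real \<Rightarrow> real" where
  "lam m s x y = LL m s x (lag (RX m s x) y)"

lemma RX_fin: "pdC m s x \<Longrightarrow> finite (RX m s x)"
  and RX_card: "pdC m s x \<Longrightarrow> card (RX m s x) = Suc m"
  using Pq_roots unfolding RX_def by auto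

lemma quad_exact:
  assumes pd: "pdC m s x" and dp: "degree p \<le> 2*m+1"
  shows "LL m s x p = (\<Sum>y\<in>RX m s x. lam m s x y * poly p y)"
proof -
  let ?P = "Pq m s x"
  let ?X = "RX m s x"
  have Pnz: "?P \<noteq> 0" and degP: "degree ?P = Suc m" using degree_Pq[OF pd] by auto
  have fin: "finite ?X" and cX: "card ?X = Suc m" using RX_fin[OF pd] RX_card[OF pd] .
  define d where "d = p div ?P"
  define r where "r = p mod ?P"
  have pdr: "p = ?P * d + r" unfolding d_def r_def by simp
  have dr: "degree r < Suc m"
  proof (cases "r = 0")
    case True then show ?thesis by simp
  next
    case False then show ?thesis using degree_mod_less'[OF Pnz] degP unfolding r_def by auto
  qed
  have dd: "degree d \<le> m"
  proof (cases "d = 0")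
    case True then show ?thesis by simp
  next
    case False
    have e: "degree (?P * d) = Suc m + degree d" using False Pnz degP by (simp add: degree_mult_eq)
    then have "degree r < degree (?P * d)" using dr by simp
    then have "degree p = degree (?P * d)" using pdr by (simp add: degree_add_eq_left)
    then show ?thesis using e dp by simp
  qed
  have "LL m s x p = LL m s x (?P * d) + LL m s x r" using pdr by (simp add: LL_add)
  also have "LL m s x (?P * d) = 0" by (rule LL_Pq_orth[OF dd])
  also have "r = (\<Sum>y\<in>?X. Polynomial.smult (poly r y) (lag ?X y))"
    by (rule interp[OF fin]) (use dr cX in simp)
  then have "LL m s x r = (\<Sum>y\<in>?X. poly r y * lam m s x y)"
    unfolding lam_def by (metis (no_types, lifting) LL_smult LL_sum sum.cong)
  also have "\<dots> = (\<Sum>y\<in>?X. lam m s x y * poly p y)"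
  proof (intro sum.cong refl)
    fix y assume "y \<in> ?X"
    then have "poly ?P y = 0" by (simp add: RX_def)
    then show "poly r y * lam m s x y = lam m s x y * poly p y" using pdr by simp
  qed
  finally show ?thesis by simp
qed

lemma sum_lag_delta:
  assumes "finite X" "y \<in> X"
  shows "(\<Sum>z\<in>X. f z * g (poly (lag X y) z)) = f y * g 1 + (\<Sum>z\<in>X-{y}. f z * g 0)"
proof -
  have "(\<Sum>z\<in>X. f z * g (poly (lag X y) z)) = f y * g (poly (lag X y) y) + (\<Sum>z\<in>X-{y}. f z * g (poly (lag X y) z))"
    using assms by (simp add: sum.remove)
  also have "(\<Sum>z\<in>X-{y}. f z * g (poly (lag X y) z)) = (\<Sum>z\<in>X-{y}. f z * g 0)"
    using assms by (intro sum.cong refl) (auto simp: poly_lag)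
  finally show ?thesis using assms by (simp add: poly_lag)
qed

lemma lam_pos:
  assumes pd: "pdC m s x" and y: "y \<in> RX m s x"
  shows "lam m s x y > 0"
proof -
  let ?X = "RX m s x"
  let ?l = "lag ?X y"
  have fin: "finite ?X" and cX: "card ?X = Suc m" using RX_fin[OF pd] RX_card[OF pd] .
  have dl: "degree ?l = m" using degree_lag[OF fin y] cX by simp
  have "degree (?l^2) \<le> 2*m+1" using degree_power_le[of ?l 2] dl by simp
  then have "LL m s x (?l^2) = (\<Sum>z\<in>?X. lam m s x z * (poly ?l z)^2)"
    by (simp add: quad_exact[OF pd])
  also have "\<dots> = lam m s x y" using sum_lag_delta[OF fin y, of "lam m s x" "\<lambda>t. t^2"] by simp
  finally have e: "LL m s x (?l^2) = lam m s x y" .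
  have "?l \<noteq> 0" using poly_lag[OF fin y y] by auto
  then have "LL m s x (?l^2) > 0" using pd dl unfolding pdC_def by auto
  then show ?thesis using e by simp
qed

lemma RX_pos:
  assumes pd: "pdC m s x" and y: "y \<in> RX m s x" and sp: "strictly_pos_on (2*m) s a b"
  shows "y > 0"
proof -
  let ?X = "RX m s x"
  let ?l = "lag ?X y"
  have fin: "finite ?X" and cX: "card ?X = Suc m" using RX_fin[OF pd] RX_card[OF pd] .
  have dl: "degree ?l = m" using degree_lag[OF fin y] cX by simp
  have d2: "degree (?l^2) \<le> 2*m" using degree_power_le[of ?l 2] dl by simp
  have lnz: "?l \<noteq> 0" using poly_lag[OF fin y y] by auto
  have "mom_functional (2*m) s (?l^2) > 0"
    using sp d2 lnz unfolding strictly_pos_on_def by auto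
  then have pos: "LL m s x (pCons 0 (?l^2)) > 0" by (simp add: LL_pCons0)
  have "degree (pCons 0 (?l^2)) \<le> 2*m+1" using d2 by (simp add: degree_pCons_eq_if)
  then have "LL m s x (pCons 0 (?l^2)) = (\<Sum>z\<in>?X. lam m s x z * (z * (poly ?l z)^2))"
    by (simp add: quad_exact[OF pd])
  also have "\<dots> = (\<Sum>z\<in>?X. (lam m s x z * z) * (poly ?l z)^2)" by (simp add: mult_ac)
  also have "\<dots> = lam m s x y * y" using sum_lag_delta[OF fin y, of "\<lambda>z. lam m s x z * z" "\<lambda>t. t^2"] by simp
  finally have "lam m s x y * y > 0" using pos by simp
  then show ?thesis using lam_pos[OF pd y] by (simp add: zero_less_mult_iff)
qed


lemma coeff_sq0: "coeff (q^2) 0 = (poly q 0)^2"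
  by (simp add: power2_eq_square coeff_mult_0 poly_0_coeff_0)

lemma pdC_mono:
  assumes "pdC m s x" "x \<le> y"
  shows "pdC m s y"
  unfolding pdC_def
proof (intro allI impI)
  fix q :: "real poly" assume q: "q \<noteq> 0 \<and> degree q \<le> m"
  have "LL m s x (q^2) > 0" using assms(1) q unfolding pdC_def by auto
  moreover have "(y - x) * coeff (q^2) 0 \<ge> 0" using assms(2) by (simp add: coeff_sq0)
  ultimately show "LL m s y (q^2) > 0" by (simp add: LL_shift[of m s y _ x])
qed

lemma pdC_open:
  assumes pd: "pdC m s x"
  shows "\<exists>e>0. pdC m s (x - e)"
proof -
  let ?X = "RX m s x"
  have fin: "finite ?X" and cX: "card ?X = Suc m" using RX_fin[OF pd] RX_card[OF pd] .
  define S where "S = (\<Sum>y\<in>?X. (poly (lag ?X y) 0)^2 / lam m s x y)"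
  have S0: "S \<ge> 0" unfolding S_def using lam_pos[OF pd] by (intro sum_nonneg) (simp add: less_imp_le)
  define e where "e = 1 / (S + 1)"
  have e0: "e > 0" using S0 by (simp add: e_def)
  have "pdC m s (x - e)"
    unfolding pdC_def
  proof (intro allI impI)
    fix q :: "real poly" assume q: "q \<noteq> 0 \<and> degree q \<le> m"
    define A where "A = LL m s x (q^2)"
    have A0: "A > 0" using pd q unfolding pdC_def A_def by auto
    have "degree (q^2) \<le> 2*m+1" using degree_power_le[of q 2] q by simp
    then have Aeq: "A = (\<Sum>y\<in>?X. lam m s x y * (poly q y)^2)" unfolding A_def by (simp add: quad_exact[OF pd])
    have "q = (\<Sum>y\<in>?X. Polynomial.smult (poly q y) (lag ?X y))"
      by (rule interp[OF fin]) (use q cX in simp)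
    then have q0: "poly q 0 = (\<Sum>y\<in>?X. poly q y * poly (lag ?X y) 0)"
      by (metis (no_types, lifting) poly_smult poly_sum sum.cong)
    also have "\<dots> = (\<Sum>y\<in>?X. (sqrt (lam m s x y) * poly q y) * (poly (lag ?X y) 0 / sqrt (lam m s x y)))"
    proof (intro sum.cong refl)
      fix y assume y: "y \<in> ?X"
      have "sqrt (lam m s x y) > 0" using lam_pos[OF pd y] by simp
      then show "poly q y * poly (lag ?X y) 0 = (sqrt (lam m s x y) * poly q y) * (poly (lag ?X y) 0 / sqrt (lam m s x y))"
        by (simp add: field_simps)
    qed
    finally have "(poly q 0)^2 \<le> (\<Sum>y\<in>?X. (sqrt (lam m s x y) * poly q y)^2) * (\<Sum>y\<in>?X. (poly (lag ?X y) 0 / sqrt (lam m s x y))^2)"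
      by (metis Cauchy_Schwarz_ineq_sum)
    also have "(\<Sum>y\<in>?X. (sqrt (lam m s x y) * poly q y)^2) = A"
      unfolding Aeq using lam_pos[OF pd] by (intro sum.cong refl) (simp add: power_mult_distrib less_imp_le)
    also have "(\<Sum>y\<in>?X. (poly (lag ?X y) 0 / sqrt (lam m s x y))^2) = S"
      unfolding S_def using lam_pos[OF pd] by (intro sum.cong refl) (simp add: power_divide less_imp_le)
    finally have CS: "(poly q 0)^2 \<le> A * S" .
    have "LL m s (x - e) (q^2) = A - e * (poly q 0)^2"
      unfolding A_def by (simp add: LL_shift[of m s "x - e" _ x] coeff_sq0)
    also have "e * (poly q 0)^2 \<le> e * (A * S)" using CS e0 by (simp add: mult_left_mono)
    then have "A - e * (poly q 0)^2 \<ge> A - e * (A * S)" by simp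
    moreover have "A - e * (A * S) = A / (S + 1)" using S0 by (simp add: e_def field_simps)
    moreover have "A / (S + 1) > 0" using A0 S0 by simp
    ultimately show "LL m s (x - e) (q^2) > 0"
      using \<open>LL m s (x - e) (q^2) = A - e * (poly q 0)^2\<close> by linarith
  qed
  then show ?thesis using e0 by blast
qed

lemma space_borelish: "sets \<mu> = sets (borel :: real measure) \<Longrightarrow> space \<mu> = UNIV"
  using sets_eq_imp_space_eq by fastforce

lemma meas_borel:
  assumes "sets \<mu> = sets (borel :: real measure)" "f \<in> borel_measurable borel"
  shows "(f :: real \<Rightarrow> real) \<in> borel_measurable \<mu>"
  using assms measurable_cong_sets[of \<mu> borel borel borel] by simp

lemma disc_integral:
  fixes \<mu> :: "real measure"
  assumes sb: "sets \<mu> = sets borel" and fin: "finite X" and null: "emeasure \<mu> (- X) = 0"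
    and fm: "emeasure \<mu> UNIV \<noteq> \<infinity>" and f: "f \<in> borel_measurable borel"
  shows "integrable \<mu> f" "(\<integral>t. f t \<partial>\<mu>) = (\<Sum>x\<in>X. measure \<mu> {x} * f x)"
proof -
  have sp: "space \<mu> = UNIV" using space_borelish[OF sb] .
  have setsX: "A \<in> sets \<mu>" if "A \<in> sets borel" for A using that sb by simp
  have cX: "-X \<in> sets \<mu>" using fin by (intro setsX borel_open) (simp add: finite_imp_closed open_Compl)
  have AE: "AE t in \<mu>. t \<in> X"
    by (rule AE_I'[of "-X"]) (use cX null in auto)
  have fin_m: "emeasure \<mu> A < \<infinity>" for A
    using emeasure_space[of \<mu> A] fm sp by (simp add: less_top top.not_eq_extremum order_le_less_trans)
  have sing: "{x} \<in> sets \<mu>" for x :: real by (intro setsX) simp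
  have eq: "AE t in \<mu>. f t = (\<Sum>x\<in>X. f x * indicator {x} t)"
    using AE
  proof eventually_elim
    case (elim t)
    have "(\<Sum>x\<in>X. f x * indicator {x} t) = (\<Sum>x\<in>X. if x = t then f t else 0)"
      by (intro sum.cong refl) (auto simp: indicator_def)
    also have "\<dots> = f t" using elim fin by simp
    finally show ?case by simp
  qed
  have intx: "integrable \<mu> (\<lambda>t. f x * indicator {x} t)" for x
    by (intro integrable_mult_right integrable_real_indicator sing fin_m)
  have int2: "integrable \<mu> (\<lambda>t. \<Sum>x\<in>X. f x * indicator {x} t)"
    using intx by auto
  have mf: "f \<in> borel_measurable \<mu>" using meas_borel[OF sb f] .
  show "integrable \<mu> f"
    by (rule integrable_cong_AE_imp[OF int2 mf]) (use eq in \<open>auto elim: AE_mp\<close>)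
  have "(\<integral>t. f t \<partial>\<mu>) = (\<integral>t. (\<Sum>x\<in>X. f x * indicator {x} t) \<partial>\<mu>)"
    by (rule integral_cong_AE[OF mf]) (use int2 eq in auto)
  also have "\<dots> = (\<Sum>x\<in>X. f x * measure \<mu> {x})"
    using Bochner_Integration.integral_sum[where I=X and M=\<mu> and f="\<lambda>x t. f x * indicator {x} t", OF intx] by (simp add: sp)
  finally show "(\<integral>t. f t \<partial>\<mu>) = (\<Sum>x\<in>X. measure \<mu> {x} * f x)" by (simp add: mult.commute)
qed

lemma msupp_null:
  fixes \<mu> :: "real measure"
  assumes sb: "sets \<mu> = sets borel"
  shows "emeasure \<mu> (- msupp \<mu>) = 0"
proof -
  define F where "F = {ball z e | z e. e > 0 \<and> emeasure \<mu> (ball z e) = 0}"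
  have opF: "\<And>S. S \<in> F \<Longrightarrow> open S" unfolding F_def by auto
  have UF: "\<Union>F = - msupp \<mu>"
  proof
    show "\<Union>F \<subseteq> - msupp \<mu>"
    proof
      fix y assume "y \<in> \<Union>F"
      then obtain z e where ze: "e > 0" "emeasure \<mu> (ball z e) = 0" "y \<in> ball z e" unfolding F_def by auto
      define d where "d = e - dist z y"
      have d: "d > 0" using ze(3) by (simp add: d_def)
      have "ball y d \<subseteq> ball z e" unfolding d_def by (rule ball_subset_ball_iff[THEN iffD2]) (use ze(3) in \<open>auto simp: dist_commute\<close>)
      then have "emeasure \<mu> (ball y d) \<le> emeasure \<mu> (ball z e)"
        by (intro emeasure_mono) (simp_all add: sb borel_open)
      then have "emeasure \<mu> (ball y d) = 0" using ze(2) by simp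
      then show "y \<in> - msupp \<mu>" unfolding msupp_def using d by auto
    qed
    show "- msupp \<mu> \<subseteq> \<Union>F"
    proof
      fix y assume "y \<in> - msupp \<mu>"
      then obtain e where "e > 0" "\<not> emeasure \<mu> (ball y e) > 0" unfolding msupp_def by auto
      then have "ball y e \<in> F" unfolding F_def by (auto simp: not_gr_zero)
      then show "y \<in> \<Union>F" using \<open>e > 0\<close> by (metis UnionI centre_in_ball)
    qed
  qed
  obtain F' where F': "F' \<subseteq> F" "countable F'" "\<Union>F' = \<Union>F" using Lindelof[OF opF] by metis
  have "(\<Union>B\<in>F'. B) \<in> null_sets \<mu>"
  proof (rule null_sets_UN'[OF F'(2)])
    fix B assume "B \<in> F'"
    then have "B \<in> F" using F'(1) by auto
    then show "B \<in> null_sets \<mu>" unfolding F_def by (auto simp: sb null_sets_def)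
  qed
  then show ?thesis using F'(3) UF by auto
qed

lemma msupp_point_pos:
  fixes \<mu> :: "real measure"
  assumes sb: "sets \<mu> = sets borel" and fin: "finite (msupp \<mu>)" and x: "x \<in> msupp \<mu>"
  shows "emeasure \<mu> {x} > 0"
proof -
  let ?X = "msupp \<mu>"
  obtain d where d: "d > 0" "\<forall>y\<in>?X. y \<noteq> x \<longrightarrow> d \<le> dist x y" using finite_set_avoid[OF fin] by blast
  have pos: "emeasure \<mu> (ball x d) > 0" using x d(1) unfolding msupp_def by auto
  have cX: "- ?X \<in> sets \<mu>" using fin by (simp add: sb finite_imp_closed open_Compl borel_open)
  have "ball x d \<subseteq> {x} \<union> - ?X" using d(2) by (auto simp: dist_commute)
  then have "emeasure \<mu> (ball x d) \<le> emeasure \<mu> ({x} \<union> - ?X)"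
    by (intro emeasure_mono) (use cX in \<open>auto simp: sb\<close>)
  also have "\<dots> \<le> emeasure \<mu> {x} + emeasure \<mu> (- ?X)"
    by (intro emeasure_subadditive) (use cX in \<open>auto simp: sb\<close>)
  also have "\<dots> = emeasure \<mu> {x}" using msupp_null[OF sb] by simp
  finally show ?thesis using pos by simp
qed

lemma poly_sum_upto:
  fixes p :: "real poly"
  assumes "degree p \<le> N"
  shows "poly p t = (\<Sum>k\<le>N. coeff p k * t ^ k)"
proof -
  have "poly p t = (\<Sum>k\<le>degree p. coeff p k * t ^ k)" by (simp add: poly_altdef)
  also have "\<dots> = (\<Sum>k\<le>N. coeff p k * t ^ k)"
    by (rule sum.mono_neutral_left) (use assms in \<open>auto simp: coeff_eq_0\<close>)
  finally show ?thesis .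
qed

lemma poly_meas[measurable]: "poly (p :: real poly) \<in> borel_measurable borel"
  by (intro borel_measurable_continuous_onI) (auto intro: continuous_intros)

lemma id_meas[measurable]: "(\<lambda>x::real. x) \<in> borel_measurable borel"
  by simp

locale Mab =
  fixes m :: nat and s :: "nat \<Rightarrow> real" and a b :: real and \<mu> :: "real measure"
  assumes mu: "\<mu> \<in> M_ab (2*m) s a b" and a0: "0 < a" and ab: "a < b"
begin

lemma sb: "sets \<mu> = sets borel" using mu by (simp add: M_ab_def)

lemma sp: "space \<mu> = UNIV" using space_borelish[OF sb] .

lemma null: "emeasure \<mu> (- {a..b}) = 0" using mu by (simp add: M_ab_def)

lemma mom: "k \<le> 2*m \<Longrightarrow> integrable \<mu> (\<lambda>t. t ^ k) \<and> (\<integral>t. t ^ k \<partial>\<mu>) = s k"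
  using mu by (simp add: M_ab_def)

lemma fm: "emeasure \<mu> UNIV \<noteq> \<infinity>"
proof -
  have "integrable \<mu> (\<lambda>t::real. (1::real))" using mom[of 0] by simp
  then show ?thesis using sp by (auto simp: integrable_iff_bounded)
qed

lemma finm: "finite_measure \<mu>" using fm sp by (intro finite_measureI) simp

lemma AEab: "AE t in \<mu>. t \<in> {a..b}"
  by (rule AE_I'[of "- {a..b}"]) (use null in \<open>auto simp: sb null_sets_def\<close>)

lemma int_inv: "integrable \<mu> (\<lambda>t. 1 / t)"
proof (rule finite_measure.integrable_const_bound[OF finm, where B="1/a"])
  show "AE t in \<mu>. norm (1 / t) \<le> 1 / a" using AEab
    by eventually_elim (use a0 in \<open>auto simp: field_simps\<close>)
  show "(\<lambda>t::real. 1 / t) \<in> borel_measurable \<mu>" by (rule meas_borel[OF sb]) measurable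
qed

lemma int_poly:
  assumes "degree p \<le> 2*m"
  shows "integrable \<mu> (\<lambda>t. poly p t)" "(\<integral>t. poly p t \<partial>\<mu>) = mom_functional (2*m) s p"
proof -
  have e: "(\<lambda>t. poly p t) = (\<lambda>t. \<Sum>k\<le>2*m. coeff p k * t ^ k)"
    using poly_sum_upto[OF assms] by auto
  have i: "integrable \<mu> (\<lambda>t. coeff p k * t ^ k)" if "k \<in> {..2*m}" for k
    using mom[of k] that by auto
  show "integrable \<mu> (\<lambda>t. poly p t)" unfolding e using i by auto
  show "(\<integral>t. poly p t \<partial>\<mu>) = mom_functional (2*m) s p"
    unfolding e mom_functional_def
    using Bochner_Integration.integral_sum[where I="{..2*m}" and f="\<lambda>k t. coeff p k * t ^ k", OF i]
    by (simp add: mom)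
qed

lemma int_poly_div:
  assumes "degree p \<le> 2*m+1"
  shows "integrable \<mu> (\<lambda>t. poly p t / t)" "(\<integral>t. poly p t / t \<partial>\<mu>) = LL m s (\<integral>t. 1 / t \<partial>\<mu>) p"
proof -
  define g where "g = (\<lambda>t::real. coeff p 0 * (1 / t) + (\<Sum>k\<le>2*m. coeff p (Suc k) * t ^ k))"
  have AEeq: "AE t in \<mu>. poly p t / t = g t" using AEab
  proof eventually_elim
    case (elim t)
    then have t0: "t \<noteq> 0" using a0 by auto
    have "poly p t = (\<Sum>k\<le>Suc (2*m). coeff p k * t ^ k)" using poly_sum_upto[of p "Suc (2*m)"] assms by simp
    also have "\<dots> = coeff p 0 + (\<Sum>k\<le>2*m. coeff p (Suc k) * t ^ Suc k)"
      by (simp add: sum.atMost_Suc_shift del: sum.atMost_Suc)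
    finally have "poly p t = coeff p 0 + t * (\<Sum>k\<le>2*m. coeff p (Suc k) * t ^ k)"
      by (simp add: sum_distrib_left mult_ac)
    then show ?case using t0 by (simp add: g_def field_simps)
  qed
  have i: "integrable \<mu> (\<lambda>t. coeff p (Suc k) * t ^ k)" if "k \<in> {..2*m}" for k
    using mom[of k] that by auto
  have i1: "integrable \<mu> (\<lambda>t. coeff p 0 * (1 / t))" by (rule integrable_mult_right) (rule int_inv)
  have i2: "integrable \<mu> (\<lambda>t. \<Sum>k\<le>2*m. coeff p (Suc k) * t ^ k)" using i by auto
  have ig: "integrable \<mu> g" unfolding g_def by (rule Bochner_Integration.integrable_add[OF i1 i2])
  have mf: "(\<lambda>t. poly p t / t) \<in> borel_measurable \<mu>" by (rule meas_borel[OF sb]) measurable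
  show "integrable \<mu> (\<lambda>t. poly p t / t)"
    by (rule integrable_cong_AE_imp[OF ig mf]) (use AEeq in \<open>auto elim: AE_mp\<close>)
  have "(\<integral>t. poly p t / t \<partial>\<mu>) = (\<integral>t. g t \<partial>\<mu>)"
    by (rule integral_cong_AE[OF mf]) (use ig AEeq in auto)
  also have "\<dots> = (\<integral>t. coeff p 0 * (1 / t) \<partial>\<mu>) + (\<integral>t. (\<Sum>k\<le>2*m. coeff p (Suc k) * t ^ k) \<partial>\<mu>)"
    unfolding g_def by (rule Bochner_Integration.integral_add[OF i1 i2])
  also have "(\<integral>t. coeff p 0 * (1 / t) \<partial>\<mu>) = coeff p 0 * (\<integral>t. 1 / t \<partial>\<mu>)"
    by (rule integral_mult_right_zero)
  also have "(\<integral>t. (\<Sum>k\<le>2*m. coeff p (Suc k) * t ^ k) \<partial>\<mu>) = (\<Sum>k\<le>2*m. coeff p (Suc k) * s k)"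
    using Bochner_Integration.integral_sum[where I="{..2*m}" and f="\<lambda>k t. coeff p (Suc k) * t ^ k", OF i]
    by (simp add: mom)
  also have "coeff p 0 * (\<integral>t. 1 / t \<partial>\<mu>) + (\<Sum>k\<le>2*m. coeff p (Suc k) * s k) = LL m s (\<integral>t. 1 / t \<partial>\<mu>) p"
    unfolding LL_def by (simp add: sum.atMost_Suc_shift cc_def del: sum.atMost_Suc)
  finally show "(\<integral>t. poly p t / t \<partial>\<mu>) = LL m s (\<integral>t. 1 / t \<partial>\<mu>) p" .
qed

lemma pdC_Phi:
  assumes spos: "strictly_pos_on (2*m) s a0 b0"
  shows "pdC m s (\<integral>t. 1 / t \<partial>\<mu>)"
  unfolding pdC_def
proof (intro allI impI)
  fix q :: "real poly" assume q: "q \<noteq> 0 \<and> degree q \<le> m"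
  have d2: "degree (q^2) \<le> 2*m" using degree_power_le[of q 2] q by simp
  have "mom_functional (2*m) s (q^2) > 0" using spos d2 q unfolding strictly_pos_on_def by auto
  then have pos: "(\<integral>t. poly (q^2) t \<partial>\<mu>) > 0" using int_poly[OF d2] by simp
  have b0: "b > 0" using a0 ab by simp
  have AE: "AE t in \<mu>. (1/b) * poly (q^2) t \<le> poly (q^2) t / t" using AEab
  proof eventually_elim
    case (elim t)
    then have t0: "t > 0" "t \<le> b" using a0 by auto
    have nn: "poly (q^2) t \<ge> 0" by simp
    have "1/b \<le> 1/t" using t0 by (simp add: frac_le)
    from mult_right_mono[OF this nn] show ?case by (simp add: field_simps)
  qed
  have d21: "degree (q^2) \<le> 2*m+1" using d2 by simp
  have "(\<integral>t. (1/b) * poly (q^2) t \<partial>\<mu>) \<le> (\<integral>t. poly (q^2) t / t \<partial>\<mu>)"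
    by (rule integral_mono_AE[OF _ int_poly_div(1)[OF d21] AE]) (use int_poly(1)[OF d2] in simp)
  moreover have "(\<integral>t. (1/b) * poly (q^2) t \<partial>\<mu>) = (1/b) * (\<integral>t. poly (q^2) t \<partial>\<mu>)"
    by (rule integral_mult_right_zero)
  moreover have "(1/b) * (\<integral>t. poly (q^2) t \<partial>\<mu>) > 0" using pos b0 by simp
  ultimately show "LL m s (\<integral>t. 1 / t \<partial>\<mu>) (q^2) > 0" using int_poly_div(2)[OF d21] by linarith
qed

lemma msupp_sub: "msupp \<mu> \<subseteq> {a..b}"
proof
  fix y assume y: "y \<in> msupp \<mu>"
  show "y \<in> {a..b}"
  proof (rule ccontr)
    assume "y \<notin> {a..b}"
    then have "y \<in> - {a..b}" by simp
    moreover have "open (- {a..b})" by (simp add: open_Compl)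
    ultimately obtain e where e: "e > 0" "ball y e \<subseteq> - {a..b}"
      using open_contains_ball by blast
    have "emeasure \<mu> (ball y e) \<le> emeasure \<mu> (- {a..b})"
      by (intro emeasure_mono e(2)) (simp add: sb borel_open open_Compl)
    then have "emeasure \<mu> (ball y e) = 0" using null by simp
    then show False using y e(1) unfolding msupp_def by auto
  qed
qed

lemma emeasure_disc:
  assumes fin: "finite (msupp \<mu>)" and A: "A \<in> sets borel"
  shows "emeasure \<mu> A = (\<Sum>y\<in>A \<inter> msupp \<mu>. ennreal (measure \<mu> {y}))"
proof -
  let ?X = "msupp \<mu>"
  have cX: "- ?X \<in> sets \<mu>" using fin by (simp add: sb finite_imp_closed open_Compl borel_open)
  have A': "A \<in> sets \<mu>" using A sb by simp
  have X': "?X \<in> sets \<mu>" using fin by (simp add: sb finite_imp_closed borel_closed)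
  have AX: "A \<inter> ?X \<in> sets \<mu>" "A - ?X \<in> sets \<mu>" using A' X' by auto
  have "emeasure \<mu> A = emeasure \<mu> ((A \<inter> ?X) \<union> (A - ?X))" by (simp add: Int_Diff_Un)
  also have "\<dots> = emeasure \<mu> (A \<inter> ?X) + emeasure \<mu> (A - ?X)"
    by (rule plus_emeasure[OF AX, symmetric]) auto
  also have "emeasure \<mu> (A - ?X) = 0"
  proof -
    have "emeasure \<mu> (A - ?X) \<le> emeasure \<mu> (- ?X)" by (intro emeasure_mono) (use cX in auto)
    then show ?thesis using msupp_null[OF sb] by simp
  qed
  also have "emeasure \<mu> (A \<inter> ?X) = (\<Sum>y\<in>A \<inter> ?X. emeasure \<mu> {y})"
    by (rule emeasure_eq_sum_singleton) (use fin in \<open>auto simp: sb\<close>)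
  also have "\<dots> = (\<Sum>y\<in>A \<inter> ?X. ennreal (measure \<mu> {y}))"
    using finite_measure.emeasure_eq_measure[OF finm] by simp
  finally show ?thesis by simp
qed

lemma Phi_disc:
  assumes fin: "finite (msupp \<mu>)" and f: "f \<in> borel_measurable borel"
  shows "(\<integral>t. f t \<partial>\<mu>) = (\<Sum>y\<in>msupp \<mu>. measure \<mu> {y} * f y)"
  using disc_integral(2)[OF sb fin msupp_null[OF sb] fm f] .

end

lemma sum_lag_pick:
  assumes "finite X" "y \<in> X"
  shows "(\<Sum>z\<in>X. h z * poly (lag X y) z) = h y"
proof -
  have "(\<Sum>z\<in>X. h z * poly (lag X y) z) = h y * poly (lag X y) y + (\<Sum>z\<in>X-{y}. h z * poly (lag X y) z)"
    using assms by (simp add: sum.remove)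
  also have "(\<Sum>z\<in>X-{y}. h z * poly (lag X y) z) = 0"
    using assms by (intro sum.neutral) (auto simp: poly_lag)
  finally show ?thesis using assms by (simp add: poly_lag)
qed

context Mab
begin

lemma Mmin_struct:
  assumes spos: "strictly_pos_on (2*m) s a0 b0" and fin: "finite (msupp \<mu>)" and card: "card (msupp \<mu>) = Suc m"
  shows "msupp \<mu> = RX m s (\<integral>t. 1 / t \<partial>\<mu>)"
    and "\<And>y. y \<in> msupp \<mu> \<Longrightarrow> measure \<mu> {y} = lam m s (\<integral>t. 1 / t \<partial>\<mu>) y * y"
proof -
  define x where "x = (\<integral>t. 1 / t \<partial>\<mu>)"
  let ?X = "msupp \<mu>"
  have pd: "pdC m s x" unfolding x_def by (rule pdC_Phi[OF spos])
  have wpos: "measure \<mu> {y} > 0" if "y \<in> ?X" for y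
  proof -
    have "emeasure \<mu> {y} > 0" by (rule msupp_point_pos[OF sb fin that])
    then show ?thesis using finite_measure.emeasure_eq_measure[OF finm] by simp
  qed
  have ypos: "y > 0" if "y \<in> ?X" for y using msupp_sub that a0 by force
  have LLd: "LL m s x p = (\<Sum>z\<in>?X. (measure \<mu> {z} / z) * poly p z)" if "degree p \<le> 2*m+1" for p
  proof -
    have "LL m s x p = (\<integral>t. poly p t / t \<partial>\<mu>)" unfolding x_def using int_poly_div(2)[OF that] by simp
    also have "\<dots> = (\<Sum>z\<in>?X. measure \<mu> {z} * (poly p z / z))"
      by (rule Phi_disc[OF fin]) measurable
    finally show ?thesis by simp
  qed
  have sub: "?X \<subseteq> RX m s x"
  proof
    fix y assume y: "y \<in> ?X"
    have dl: "degree (lag ?X y) = m" using degree_lag[OF fin y] card by simp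
    have dp: "degree (Pq m s x * lag ?X y) \<le> 2*m+1"
      using degree_mult_le[of "Pq m s x" "lag ?X y"] degree_Pq[OF pd] dl by simp
    have "0 = LL m s x (Pq m s x * lag ?X y)" using LL_Pq_orth[of "lag ?X y" m s x] dl by simp
    also have "\<dots> = (\<Sum>z\<in>?X. (measure \<mu> {z} / z * poly (Pq m s x) z) * poly (lag ?X y) z)"
      using LLd[OF dp] by (simp add: mult_ac)
    also have "\<dots> = measure \<mu> {y} / y * poly (Pq m s x) y" by (rule sum_lag_pick[OF fin y])
    finally have "poly (Pq m s x) y = 0" using wpos[OF y] ypos[OF y] by simp
    then show "y \<in> RX m s x" by (simp add: RX_def)
  qed
  have eq: "?X = RX m s x"
    using card_subset_eq[OF RX_fin[OF pd] sub] card RX_card[OF pd] by simp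
  then show "msupp \<mu> = RX m s (\<integral>t. 1 / t \<partial>\<mu>)" unfolding x_def .
  fix y assume y: "y \<in> ?X"
  have dl: "degree (lag ?X y) \<le> 2*m+1" using degree_lag[OF fin y] card by simp
  have "lam m s x y = LL m s x (lag ?X y)" unfolding lam_def eq ..
  also have "\<dots> = (\<Sum>z\<in>?X. (measure \<mu> {z} / z) * poly (lag ?X y) z)" using LLd[OF dl] by simp
  also have "\<dots> = measure \<mu> {y} / y" by (rule sum_lag_pick[OF fin y])
  finally show "measure \<mu> {y} = lam m s (\<integral>t. 1 / t \<partial>\<mu>) y * y"
    unfolding x_def[symmetric] using ypos[OF y] by simp
qed

end


definition pm :: "real set \<Rightarrow> (real \<Rightarrow> real) \<Rightarrow> real measure" where
  "pm X w = distr (point_measure X (\<lambda>y. ennreal (w y))) borel (\<lambda>t. t)"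

lemma pm_sets: "sets (pm X w) = sets borel"
  unfolding pm_def by simp

lemma pm_emeasure:
  assumes "finite X" "A \<in> sets borel"
  shows "emeasure (pm X w) A = (\<Sum>y\<in>A \<inter> X. ennreal (w y))"
proof -
  have meas: "(\<lambda>t. t) \<in> point_measure X (\<lambda>y. ennreal (w y)) \<rightarrow>\<^sub>M borel"
    by (simp add: measurable_point_measure_eq1)
  have "emeasure (pm X w) A = emeasure (point_measure X (\<lambda>y. ennreal (w y))) (A \<inter> X)"
    unfolding pm_def using emeasure_distr[OF meas assms(2)] by (simp add: space_point_measure)
  also have "\<dots> = (\<Sum>y\<in>A \<inter> X. ennreal (w y))"
    using emeasure_point_measure_finite[OF assms(1)] by auto
  finally show ?thesis .
qed

lemma pm_props:
  assumes fin: "finite X" and wpos: "\<And>y. y \<in> X \<Longrightarrow> w y > 0"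
  shows "emeasure (pm X w) UNIV \<noteq> \<infinity>" "emeasure (pm X w) (- X) = 0"
    "\<And>y. y \<in> X \<Longrightarrow> measure (pm X w) {y} = w y" "msupp (pm X w) = X"
proof -
  show "emeasure (pm X w) UNIV \<noteq> \<infinity>" using pm_emeasure[OF fin, of UNIV w] fin by (simp add: ennreal_sum_eq_top)
  show "emeasure (pm X w) (- X) = 0" using pm_emeasure[OF fin, of "- X" w] fin
    by (simp add: finite_imp_closed open_Compl borel_open)
  show "measure (pm X w) {y} = w y" if "y \<in> X" for y
    using pm_emeasure[OF fin, of "{y}" w] that wpos[OF that] by (simp add: measure_def)
  show "msupp (pm X w) = X"
  proof
    show "msupp (pm X w) \<subseteq> X"
    proof
      fix y assume y: "y \<in> msupp (pm X w)"
      show "y \<in> X"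
      proof (rule ccontr)
        assume yX: "y \<notin> X"
        obtain d where d: "d > 0" "\<forall>z\<in>X. z \<noteq> y \<longrightarrow> d \<le> dist y z" using finite_set_avoid[OF fin] by blast
        have "ball y d \<inter> X = {}" using d yX by (auto simp: dist_commute)
        then have "emeasure (pm X w) (ball y d) = 0" using pm_emeasure[OF fin, of "ball y d" w]
          by (simp add: borel_open)
        then show False using y d(1) unfolding msupp_def by auto
      qed
    qed
    show "X \<subseteq> msupp (pm X w)"
    proof
      fix y assume y: "y \<in> X"
      have "emeasure (pm X w) (ball y e) > 0" if e: "e > 0" for e
      proof -
        have le: "ennreal (w y) \<le> (\<Sum>z\<in>ball y e \<inter> X. ennreal (w z))"
          by (rule member_le_sum) (use y e fin in auto)
        have "0 < ennreal (w y)" using wpos[OF y] by simp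
        then have "0 < (\<Sum>z\<in>ball y e \<inter> X. ennreal (w z))" using le by (rule order_less_le_trans)
        then show ?thesis using pm_emeasure[OF fin, of "ball y e" w] by (simp add: borel_open)
      qed
      then show "y \<in> msupp (pm X w)" unfolding msupp_def by auto
    qed
  qed
qed

lemma construct:
  assumes pd: "pdC m s x" and spos: "strictly_pos_on (2*m) s a0 b0"
  shows "\<exists>\<mu> a b. 0 < a \<and> a < b \<and> \<mu> \<in> M_ab (2*m) s a b \<and> msupp \<mu> = RX m s x \<and> (\<integral>t. 1 / t \<partial>\<mu>) = x"
proof -
  let ?X = "RX m s x"
  define w where "w y = lam m s x y * y" for y
  have fin: "finite ?X" and cX: "card ?X = Suc m" using RX_fin[OF pd] RX_card[OF pd] .
  have ne: "?X \<noteq> {}" using cX by auto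
  have ypos: "y > 0" if "y \<in> ?X" for y using RX_pos[OF pd that spos] .
  have wpos: "w y > 0" if "y \<in> ?X" for y using lam_pos[OF pd that] ypos[OF that] by (simp add: w_def)
  define \<mu> where "\<mu> = pm ?X w"
  note P = pm_props[where X="RX m s x" and w=w, OF fin wpos, folded \<mu>_def]
  have sb: "sets \<mu> = sets borel" unfolding \<mu>_def by (rule pm_sets)
  define a where "a = Min ?X / 2"
  define b where "b = Max ?X + 1"
  have minpos: "Min ?X > 0" using ypos Min_in[OF fin ne] by blast
  have a0: "0 < a" using minpos by (simp add: a_def)
  have inab: "y \<in> {a<..<b}" if "y \<in> ?X" for y
    using Min_le[OF fin that] Max_ge[OF fin that] minpos by (auto simp: a_def b_def)
  have ab: "a < b" using inab ne by fastforce
  have intd: "integrable \<mu> f \<and> (\<integral>t. f t \<partial>\<mu>) = (\<Sum>y\<in>?X. w y * f y)" if "f \<in> borel_measurable borel" for f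
    using disc_integral[OF sb fin P(2) P(1) that] P(3) by simp
  have "\<mu> \<in> M_ab (2*m) s a b"
    unfolding M_ab_def
  proof (intro CollectI conjI allI impI)
    show "sets \<mu> = sets borel" by (rule sb)
    have "y \<in> {a..b}" if "y \<in> ?X" for y using inab[OF that] by auto
    then have "- {a..b} \<inter> ?X = {}" by auto
    then show "emeasure \<mu> (- {a..b}) = 0" unfolding \<mu>_def using pm_emeasure[OF fin, of "- {a..b}" w]
      by (simp add: borel_open open_Compl)
    fix k assume k: "k \<le> 2*m"
    show "integrable \<mu> (\<lambda>t. t ^ k)" using intd[of "\<lambda>t. t ^ k"] by simp
    have "(\<integral>t. t ^ k \<partial>\<mu>) = (\<Sum>y\<in>?X. lam m s x y * poly (monom 1 (Suc k)) y)"
      using intd[of "\<lambda>t. t ^ k"] by (simp add: w_def poly_monom mult_ac)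
    also have "\<dots> = LL m s x (monom 1 (Suc k))"
      by (rule quad_exact[OF pd, symmetric]) (use k in \<open>simp add: degree_monom_eq\<close>)
    also have "\<dots> = s k" using k by (simp add: LL_monom cc_def)
    finally show "(\<integral>t. t ^ k \<partial>\<mu>) = s k" .
  qed
  moreover have "(\<integral>t. 1 / t \<partial>\<mu>) = x"
  proof -
    have "(\<integral>t. 1 / t \<partial>\<mu>) = (\<Sum>y\<in>?X. lam m s x y * poly 1 y)"
    proof -
      have "(\<integral>t. 1 / t \<partial>\<mu>) = (\<Sum>y\<in>?X. w y * (1 / y))" using intd[of "\<lambda>t. 1 / t"] by simp
      also have "\<dots> = (\<Sum>y\<in>?X. lam m s x y * poly 1 y)"
        by (intro sum.cong refl) (use ypos in \<open>force simp: w_def\<close>)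
      finally show ?thesis .
    qed
    also have "\<dots> = LL m s x 1" by (rule quad_exact[OF pd, symmetric]) simp
    also have "\<dots> = x" using LL_monom[of m s x 1 0] by (simp add: cc_def)
    finally show ?thesis .
  qed
  ultimately show ?thesis using a0 ab P(4) by blast
qed

lemma main:
  assumes spos: "strictly_pos_on (2*m) s a0 b0"
  defines "Mmin \<equiv> {\<mu>\<in>M_infty (2*m) s. finite (msupp \<mu>) \<and> card (msupp \<mu>) = Suc m}"
  defines "\<Phi> \<equiv> (\<lambda>\<mu>::real measure. \<integral>t. 1 / t \<partial>\<mu>)"
  shows "bij_betw \<Phi> Mmin {x::real. t_infty (2*m) s < ereal x}
     \<and> (\<forall>sm1::real. t_infty (2*m) s < ereal sm1 \<longrightarrow>
          msupp (inv_into Mmin \<Phi> sm1) = {t::real. Q_det (Suc m) s sm1 t = 0})"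
proof -
  have F1: "\<exists>a b. 0 < a \<and> a < b \<and> \<mu> \<in> M_ab (2*m) s a b" if "\<mu> \<in> M_infty (2*m) s" for \<mu>
    using that unfolding M_infty_def by auto
  have F2: "t_infty (2*m) s \<le> ereal (\<Phi> \<mu>)" if "\<mu> \<in> M_infty (2*m) s" for \<mu>
  proof -
    note h = that
    obtain a b where ab: "0 < a" "a < b" "\<mu> \<in> M_ab (2*m) s a b" using F1[OF h] by blast
    have "t_ab (2*m) s a b \<le> ereal (\<Phi> \<mu>)" unfolding t_ab_def \<Phi>_def by (rule INF_lower) (rule ab(3))
    moreover have "(INF b\<in>{a<..}. t_ab (2*m) s a b) \<le> t_ab (2*m) s a b" by (rule INF_lower) (use ab in simp)
    moreover have "t_infty (2*m) s \<le> (INF b\<in>{a<..}. t_ab (2*m) s a b)"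
      unfolding t_infty_def by (rule INF_lower) (use ab in simp)
    ultimately show ?thesis by (meson order_trans)
  qed
  have F3: "\<exists>\<mu>\<in>M_infty (2*m) s. \<Phi> \<mu> < x" if "t_infty (2*m) s < ereal x" for x
  proof -
    from that obtain a where a: "a \<in> {0<..}" "(INF b\<in>{a<..}. t_ab (2*m) s a b) < ereal x"
      unfolding t_infty_def by (auto simp: INF_less_iff)
    then obtain b where b: "b \<in> {a<..}" "t_ab (2*m) s a b < ereal x" by (auto simp: INF_less_iff)
    then obtain \<mu> where mu: "\<mu> \<in> M_ab (2*m) s a b" "ereal (\<Phi> \<mu>) < ereal x"
      unfolding t_ab_def \<Phi>_def by (auto simp: INF_less_iff)
    have "\<mu> \<in> M_infty (2*m) s" unfolding M_infty_def using a b mu by auto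
    then show ?thesis using mu by auto
  qed
  have F4: "pdC m s (\<Phi> \<mu>)" if "\<mu> \<in> M_infty (2*m) s" for \<mu>
  proof -
    note h = that
    obtain a b where ab: "0 < a" "a < b" "\<mu> \<in> M_ab (2*m) s a b" using F1[OF h] by blast
    interpret Mab m s a b \<mu> using ab by unfold_locales auto
    show ?thesis unfolding \<Phi>_def by (rule pdC_Phi[OF spos])
  qed
  have F5: "\<exists>\<mu>\<in>Mmin. \<Phi> \<mu> = x" if pd: "pdC m s x" for x
  proof -
    obtain \<mu> a b where mu: "0 < a" "a < b" "\<mu> \<in> M_ab (2*m) s a b" "msupp \<mu> = RX m s x" "\<Phi> \<mu> = x"
      using construct[OF pd spos] unfolding \<Phi>_def by blast
    have "\<mu> \<in> M_infty (2*m) s" unfolding M_infty_def using mu by auto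
    then have "\<mu> \<in> Mmin" unfolding Mmin_def using mu(4) RX_fin[OF pd] RX_card[OF pd] by auto
    then show ?thesis using mu(5) by blast
  qed
  have S: "msupp \<mu> = RX m s (\<Phi> \<mu>) \<and> (\<forall>y\<in>msupp \<mu>. measure \<mu> {y} = lam m s (\<Phi> \<mu>) y * y)" if "\<mu> \<in> Mmin" for \<mu>
  proof -
    have mi: "\<mu> \<in> M_infty (2*m) s" "finite (msupp \<mu>)" "card (msupp \<mu>) = Suc m" using that unfolding Mmin_def by auto
    obtain a b where ab: "0 < a" "a < b" "\<mu> \<in> M_ab (2*m) s a b" using F1[OF mi(1)] by blast
    interpret Mab m s a b \<mu> using ab by unfold_locales auto
    show ?thesis using Mmin_struct[OF spos mi(2,3)] unfolding \<Phi>_def by auto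
  qed
  have inj: "inj_on \<Phi> Mmin"
  proof (rule inj_onI)
    fix \<mu>1 \<mu>2 assume m1: "\<mu>1 \<in> Mmin" and m2: "\<mu>2 \<in> Mmin" and eq: "\<Phi> \<mu>1 = \<Phi> \<mu>2"
    have e: "emeasure \<mu> A = (\<Sum>y\<in>A \<inter> RX m s (\<Phi> \<mu>). ennreal (lam m s (\<Phi> \<mu>) y * y))"
      if "\<mu> \<in> Mmin" "A \<in> sets borel" for \<mu> A
    proof -
      have mi: "\<mu> \<in> M_infty (2*m) s" "finite (msupp \<mu>)" using that unfolding Mmin_def by auto
      obtain a b where ab: "0 < a" "a < b" "\<mu> \<in> M_ab (2*m) s a b" using F1[OF mi(1)] by blast
      interpret Mab m s a b \<mu> using ab by unfold_locales auto
      have "emeasure \<mu> A = (\<Sum>y\<in>A \<inter> msupp \<mu>. ennreal (measure \<mu> {y}))" by (rule emeasure_disc[OF mi(2) that(2)])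
      also have "\<dots> = (\<Sum>y\<in>A \<inter> RX m s (\<Phi> \<mu>). ennreal (lam m s (\<Phi> \<mu>) y * y))"
        using S[OF that(1)] by (intro sum.cong) auto
      finally show ?thesis .
    qed
    have sb1: "sets \<mu>1 = sets borel" and sb2: "sets \<mu>2 = sets borel"
      using m1 m2 F1 unfolding Mmin_def M_ab_def by force+
    show "\<mu>1 = \<mu>2"
    proof (rule measure_eqI)
      show "sets \<mu>1 = sets \<mu>2" using sb1 sb2 by simp
      fix A assume "A \<in> sets \<mu>1"
      then have A: "A \<in> sets borel" using sb1 by simp
      show "emeasure \<mu>1 A = emeasure \<mu>2 A" using e[OF m1 A] e[OF m2 A] eq by simp
    qed
  qed
  have img: "\<Phi> ` Mmin = {x::real. t_infty (2*m) s < ereal x}"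
  proof
    show "\<Phi> ` Mmin \<subseteq> {x. t_infty (2*m) s < ereal x}"
    proof
      fix x assume "x \<in> \<Phi> ` Mmin"
      then obtain \<mu> where mu: "\<mu> \<in> Mmin" "x = \<Phi> \<mu>" by blast
      have mi: "\<mu> \<in> M_infty (2*m) s" using mu unfolding Mmin_def by auto
      obtain e where e: "e > 0" "pdC m s (\<Phi> \<mu> - e)" using pdC_open[OF F4[OF mi]] by blast
      obtain \<mu>' where mu': "\<mu>' \<in> Mmin" "\<Phi> \<mu>' = \<Phi> \<mu> - e" using F5[OF e(2)] by blast
      have "\<mu>' \<in> M_infty (2*m) s" using mu' unfolding Mmin_def by auto
      then have "t_infty (2*m) s \<le> ereal (\<Phi> \<mu> - e)" using F2 mu'(2) by metis
      also have "\<dots> < ereal x" using e mu by simp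
      finally show "x \<in> {x. t_infty (2*m) s < ereal x}" by simp
    qed
    show "{x. t_infty (2*m) s < ereal x} \<subseteq> \<Phi> ` Mmin"
    proof
      fix x assume "x \<in> {x. t_infty (2*m) s < ereal x}"
      then obtain \<mu> where mu: "\<mu> \<in> M_infty (2*m) s" "\<Phi> \<mu> < x" using F3 by auto
      have "pdC m s x" using pdC_mono[OF F4[OF mu(1)]] mu(2) by simp
      then show "x \<in> \<Phi> ` Mmin" using F5 by force
    qed
  qed
  have bij: "bij_betw \<Phi> Mmin {x::real. t_infty (2*m) s < ereal x}"
    unfolding bij_betw_def using inj img by blast
  moreover have "msupp (inv_into Mmin \<Phi> sm1) = {t::real. Q_det (Suc m) s sm1 t = 0}"
    if "t_infty (2*m) s < ereal sm1" for sm1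
  proof -
    have sm: "sm1 \<in> \<Phi> ` Mmin" using that img by simp
    have mem: "inv_into Mmin \<Phi> sm1 \<in> Mmin" by (rule inv_into_into[OF sm])
    have ph: "\<Phi> (inv_into Mmin \<Phi> sm1) = sm1" by (rule f_inv_into_f[OF sm])
    show ?thesis using S[OF mem] ph by (simp add: RX_def poly_Pq)
  qed
  ultimately show ?thesis by blast
qed

theorem corollary5p8:
  fixes n :: nat and s :: "nat \<Rightarrow> real"
  assumes "even n"
    and "\<forall>k\<le>n. s k \<ge> 0"
    and "strictly_pos_infty n s"
  defines "K \<equiv> nat \<lceil>(real n + 1) / 2\<rceil>"
  defines "Mmin \<equiv> {\<mu>\<in>M_infty n s. finite (msupp \<mu>) \<and> card (msupp \<mu>) = K}"
  defines "\<Phi> \<equiv> (\<lambda>\<mu>::real measure. \<integral>t. 1 / t \<partial>\<mu>)"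
  shows "bij_betw \<Phi> Mmin {x::real. t_infty n s < ereal x}
     \<and> (\<forall>sm1::real. t_infty n s < ereal sm1 \<longrightarrow>
          msupp (inv_into Mmin \<Phi> sm1) = {t::real. Q_det K s sm1 t = 0})"
proof -
  obtain m where n: "n = 2*m" using assms(1) by (elim evenE)
  obtain a0 b0 where spos: "strictly_pos_on n s a0 b0" using assms(3) unfolding strictly_pos_infty_def by blast
  have "\<lceil>(real n + 1) / 2\<rceil> = int m + 1"
    unfolding n by (intro ceiling_unique) auto
  then have K: "K = Suc m" unfolding K_def by simp
  show ?thesis
    using main[of m s a0 b0] spos unfolding Mmin_def \<Phi>_def K n by simp
qed

end
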